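(* Let $0<s<\tfrac12$ and $\gamma_2(s)=\frac{2-2^{-2s}}{1-2^{-2s}}$. For every $h\in\mathcal{H}$, $$\mathcal{E}^\delta_s(h)=\gamma_2(s)\,|I(h)|^{-2s}.$$
   Context: Let $\mathbb{R}^+=(0,\infty)$. Dyadic intervals. $\mathcal{D}$ is the family of dyadic intervals $I^j_k=(k2^{-j},(k+1)2^{-j}]$ with $j\in\mathbb{Z}$ and $k$ a nonnegative integer. Dyadic distance. $\delta(x,y)=\inf\{|I|:I\in\mathcal{D},\ x,y\in I\}$ for $x,y\in\mathbb{R}^+$. Haar system. $\mathcal{H}$ consists of the functions $h_I(x)=2^{j/2}h(2^jx-k)$ for $I=I^j_k\in\mathcal{D}$, where $h=\chi_{(0,1/2]}-\chi_{(1/2,1]}$. For $h=h_I$ write $I(h)=I$. Energy form. $\mathcal{E}^\delta_s(\varphi)=\iint_{(\mathbb{R}^+)^2}\frac{|\varphi(x)-\varphi(y)|^2}{\delta(x,y)^{2s}}\,\frac{dx\,dy}{\delta(x,y)}$. *)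

theory Defs
  imports "HOL-Analysis.Analysis"
begin

definition dyadic_interval :: "int \<Rightarrow> nat \<Rightarrow> real set" where
  "dyadic_interval j k = {real k * 2 powr (- real_of_int j) <.. (real k + 1) * 2 powr (- real_of_int j)}"

definition dyadic_len :: "int \<Rightarrow> real" where
  "dyadic_len j = 2 powr (- real_of_int j)"

definition dyadic_dist :: "real \<Rightarrow> real \<Rightarrow> real" where
  "dyadic_dist x y = Inf {dyadic_len j | j k. x \<in> dyadic_interval j k \<and> y \<in> dyadic_interval j k}"

definition haar_mother :: "real \<Rightarrow> real" where
  "haar_mother x = indicator {0<..1/2} x - indicator {1/2<..1} x"

definition haar :: "int \<Rightarrow> nat \<Rightarrow> real \<Rightarrow> real" where
  "haar j k x = 2 powr (real_of_int j / 2) * haar_mother (2 powr (real_of_int j) * x - real k)"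

definition energy :: "real \<Rightarrow> (real \<Rightarrow> real) \<Rightarrow> ennreal" where
  "energy s \<phi> = (\<integral>\<^sup>+ p. ennreal (indicator ({0<..} \<times> {0<..}) p *
       ((\<phi> (fst p) - \<phi> (snd p))\<^sup>2 / (dyadic_dist (fst p) (snd p) powr (2 * s) * dyadic_dist (fst p) (snd p))))
     \<partial>(lborel \<Otimes>\<^sub>M lborel))"

definition gamma2 :: "real \<Rightarrow> real" where
  "gamma2 s = (2 - 2 powr (- 2 * s)) / (1 - 2 powr (- 2 * s))"

end

theory Submission
  imports Defs
begin

lemma two_powr_int_pos: "0 < (2::real) powr x" by simp

lemma di_mem:
  "x \<in> dyadic_interval j k \<longleftrightarrow> real k < 2 powr real_of_int j * x \<and> 2 powr real_of_int j * x \<le> real k + 1"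
proof -
  have t: "0 < (2::real) powr real_of_int j" by simp
  have e: "(2::real) powr (- real_of_int j) = inverse (2 powr real_of_int j)"
    by (simp add: powr_minus)
  show ?thesis using t unfolding dyadic_interval_def e
    by (auto simp: field_simps)
qed

lemma di_uniq:
  assumes "x \<in> dyadic_interval j k1" "x \<in> dyadic_interval j k2" shows "k1 = k2"
proof -
  have "real k1 < real k2 + 1" "real k2 < real k1 + 1" using assms unfolding di_mem by linarith+
  then have "real k1 < real (k2 + 1)" "real k2 < real (k1 + 1)" by simp_all
  then have "k1 < k2 + 1" "k2 < k1 + 1" by (simp_all only: of_nat_less_iff)
  then show ?thesis by linarith
qed

lemma di_nest1:
  assumes "x \<in> dyadic_interval j k" shows "x \<in> dyadic_interval (j - 1) (k div 2)"
proof -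
  let ?u = "2 powr real_of_int j * x"
  have e: "(2::real) powr real_of_int (j - 1) * x = ?u / 2"
    by (simp add: powr_diff)
  have a: "2 * (k div 2) \<le> k" "k + 1 \<le> 2 * (k div 2) + 2" by linarith+
  have "real (2 * (k div 2)) \<le> real k" "real (k + 1) \<le> real (2 * (k div 2) + 2)"
    using a by (simp_all only: of_nat_le_iff)
  then have b: "2 * real (k div 2) \<le> real k" "real k + 1 \<le> 2 * real (k div 2) + 2"
    by simp_all
  show ?thesis using assms b unfolding di_mem e by auto
qed

lemma di_nest:
  assumes "x \<in> dyadic_interval j k" shows "x \<in> dyadic_interval (j - int n) (k div 2 ^ n)"
proof (induction n)
  case 0 then show ?case using assms by simp
next
  case (Suc n)
  have "x \<in> dyadic_interval (j - int n - 1) (k div 2 ^ n div 2)" using di_nest1[OF Suc] .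
  moreover have "j - int n - 1 = j - int (Suc n)" by simp
  moreover have "k div 2 ^ n div 2 = k div 2 ^ Suc n"
    using div_exp_eq[of k n 1] by (simp only: power_one_right Suc_eq_plus1)
  ultimately show ?case by simp
qed

lemma di_nest_le:
  assumes "x \<in> dyadic_interval j k" "j' \<le> j"
  shows "\<exists>k'. x \<in> dyadic_interval j' k'"
  using di_nest[OF assms(1), of "nat (j - j')"] assms(2) by auto

lemma dist_eq:
  assumes "x \<in> dyadic_interval j0 k0" "y \<in> dyadic_interval j0 k0"
    and "\<not> (\<exists>k'. x \<in> dyadic_interval (j0 + 1) k' \<and> y \<in> dyadic_interval (j0 + 1) k')"
  shows "dyadic_dist x y = dyadic_len j0"
  unfolding dyadic_dist_def
proof (rule cInf_eq_minimum)
  show "dyadic_len j0 \<in> {dyadic_len j |j k. x \<in> dyadic_interval j k \<and> y \<in> dyadic_interval j k}"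
    using assms by blast
next
  fix t assume "t \<in> {dyadic_len j |j k. x \<in> dyadic_interval j k \<and> y \<in> dyadic_interval j k}"
  then obtain j k where t: "t = dyadic_len j" and xy: "x \<in> dyadic_interval j k" "y \<in> dyadic_interval j k"
    by blast
  have "j \<le> j0"
  proof (rule ccontr)
    assume "\<not> j \<le> j0"
    then have "x \<in> dyadic_interval (j - int (nat (j - (j0+1)))) (k div 2 ^ nat (j - (j0+1)))"
         "y \<in> dyadic_interval (j - int (nat (j - (j0+1)))) (k div 2 ^ nat (j - (j0+1)))"
      using di_nest xy by blast+
    moreover have "j - int (nat (j - (j0+1))) = j0 + 1" using \<open>\<not> j \<le> j0\<close> by simp
    ultimately show False using assms(3) by auto
  qed
  then show "dyadic_len j0 \<le> t" unfolding t dyadic_len_def by simp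
qed

lemma dist_sym: "dyadic_dist x y = dyadic_dist y x"
  unfolding dyadic_dist_def by (simp add: conj_commute)

lemma di_measure: "emeasure lborel (dyadic_interval j k) = ennreal (dyadic_len j)"
proof -
  have p: "0 < (2::real) powr (- real_of_int j)" by simp
  then have "real k * 2 powr (- real_of_int j) \<le> (real k + 1) * 2 powr (- real_of_int j)"
    by (simp add: mult_right_mono)
  then show ?thesis unfolding dyadic_interval_def dyadic_len_def
    by (simp add: algebra_simps)
qed

lemma di_sets[measurable]: "dyadic_interval j k \<in> sets lborel"
  unfolding dyadic_interval_def by simp

lemma di_pos: "dyadic_interval j k \<subseteq> {0<..}"
proof
  fix x assume "x \<in> dyadic_interval j k"
  then have "real k * 2 powr (- real_of_int j) < x" unfolding dyadic_interval_def by simp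
  moreover have "0 \<le> real k * 2 powr (- real_of_int j)" by simp
  ultimately have "0 < x" by linarith
  then show "x \<in> {0<..}" by simp
qed


definition JJ :: "int \<Rightarrow> nat \<Rightarrow> nat \<Rightarrow> real set" where
  "JJ j k m = dyadic_interval (j - int m) (k div 2 ^ m)"

definition SS :: "int \<Rightarrow> nat \<Rightarrow> nat \<Rightarrow> real set" where
  "SS j k m = JJ j k (Suc m) - JJ j k m"

lemma JJ_0[simp]: "JJ j k 0 = dyadic_interval j k"
  unfolding JJ_def by simp

lemma JJ_add: "x \<in> JJ j k m \<Longrightarrow> x \<in> JJ j k (m + n)"
proof -
  assume "x \<in> JJ j k m"
  then have "x \<in> dyadic_interval (j - int m - int n) (k div 2 ^ m div 2 ^ n)"
    unfolding JJ_def by (rule di_nest)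
  moreover have "j - int m - int n = j - int (m + n)" by simp
  moreover have "k div 2 ^ m div 2 ^ n = k div 2 ^ (m + n)"
    by (rule div_exp_eq)
  ultimately show ?thesis unfolding JJ_def by simp
qed

lemma JJ_mono: "m \<le> m' \<Longrightarrow> JJ j k m \<subseteq> JJ j k m'"
proof
  fix x assume "m \<le> m'" "x \<in> JJ j k m"
  have "x \<in> JJ j k (m + (m' - m))" using \<open>x \<in> JJ j k m\<close> by (rule JJ_add)
  then show "x \<in> JJ j k m'" using \<open>m \<le> m'\<close> by simp
qed

lemma JJ_sets[measurable]: "JJ j k m \<in> sets lborel"
  unfolding JJ_def by (rule di_sets)

lemma SS_sets[measurable]: "SS j k m \<in> sets lborel"
  unfolding SS_def by (intro sets.Diff JJ_sets)

lemma JJ_pos: "JJ j k m \<subseteq> {0<..}"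
  unfolding JJ_def by (rule di_pos)

lemma SS_pos: "SS j k m \<subseteq> {0<..}"
  unfolding SS_def using JJ_pos by blast

lemma SS_I: "SS j k m \<inter> dyadic_interval j k = {}"
  unfolding SS_def using JJ_mono[of 0 m j k] by auto

lemma JJ_ex:
  assumes "0 < y" shows "\<exists>m. y \<in> JJ j k m"
proof -
  obtain n :: nat where n1: "y * 2 powr real_of_int j < real n" using reals_Archimedean2 by blast
  obtain n' :: nat where n2: "k < n'" by blast
  define N where "N = max n n'"
  have N1: "y * 2 powr real_of_int j < real N" using n1 unfolding N_def by simp
  have "n' \<le> N" unfolding N_def by simp
  then have N2: "k < 2 ^ N" using n2 less_exp[of N] by linarith
  have "real N < real (2 ^ N)" using less_exp[of N] by (simp only: of_nat_less_iff)
  then have N3: "real N < 2 ^ N" by simp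
  have kd: "k div 2 ^ N = 0" using N2 by simp
  have e: "(2::real) powr real_of_int (j - int N) = 2 powr real_of_int j / 2 ^ N"
    by (simp add: powr_diff powr_realpow)
  have p: "0 < (2::real) powr real_of_int j" by simp
  have "y * 2 powr real_of_int j \<le> 2 ^ N" using N1 N3 by linarith
  then have "2 powr real_of_int j * y / 2 ^ N \<le> 1"
    by (simp add: field_simps)
  moreover have "0 < 2 powr real_of_int j * y / 2 ^ N" using p assms by simp
  ultimately have "y \<in> JJ j k N" unfolding JJ_def di_mem kd e by simp
  then show ?thesis by blast
qed

lemma SS_ex:
  assumes "0 < y" "y \<notin> dyadic_interval j k" shows "\<exists>m. y \<in> SS j k m"
proof -
  define n where "n = (LEAST n. y \<in> JJ j k n)"
  have yn: "y \<in> JJ j k n" unfolding n_def using JJ_ex[OF assms(1)] by (rule LeastI_ex)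
  have "n \<noteq> 0"
  proof
    assume "n = 0" then show False using yn assms(2) by simp
  qed
  then obtain m where nm: "n = Suc m" using not0_implies_Suc by blast
  have "y \<notin> JJ j k m" using not_less_Least[of m "\<lambda>n. y \<in> JJ j k n"] nm unfolding n_def by auto
  then show ?thesis using yn nm unfolding SS_def by blast
qed

lemma SS_disj:
  assumes "y \<in> SS j k m" "y \<in> SS j k m'" shows "m = m'"
proof (rule ccontr)
  assume ne: "m \<noteq> m'"
  have *: False if a: "y \<in> SS j k a" "y \<in> SS j k b" "a < b" for a b
  proof -
    have "JJ j k (Suc a) \<subseteq> JJ j k b" using JJ_mono a(3) by simp
    then show False using a unfolding SS_def by blast
  qed
  show False
  proof (cases "m < m'")
    case True then show ?thesis using *[OF assms] by blast
  next
    case False then have "m' < m" using ne by simp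
    then show ?thesis using *[OF assms(2,1)] by blast
  qed
qed

lemma SS_dist:
  assumes "x \<in> dyadic_interval j k" "y \<in> SS j k m"
  shows "dyadic_dist x y = dyadic_len (j - int (Suc m))"
proof (rule dist_eq)
  have xs: "x \<in> JJ j k (Suc m)" and xm: "x \<in> JJ j k m" using JJ_mono[of 0 _ j k] assms(1) by auto
  show "x \<in> dyadic_interval (j - int (Suc m)) (k div 2 ^ Suc m)" using xs unfolding JJ_def .
  show "y \<in> dyadic_interval (j - int (Suc m)) (k div 2 ^ Suc m)" using assms(2) unfolding SS_def JJ_def by blast
  have e: "j - int (Suc m) + 1 = j - int m" by simp
  show "\<not> (\<exists>k'. x \<in> dyadic_interval (j - int (Suc m) + 1) k' \<and> y \<in> dyadic_interval (j - int (Suc m) + 1) k')"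
  proof
    assume "\<exists>k'. x \<in> dyadic_interval (j - int (Suc m) + 1) k' \<and> y \<in> dyadic_interval (j - int (Suc m) + 1) k'"
    then obtain k' where k': "x \<in> dyadic_interval (j - int m) k'" "y \<in> dyadic_interval (j - int m) k'"
      unfolding e by blast
    have "k' = k div 2 ^ m" using di_uniq[OF k'(1)] xm unfolding JJ_def by blast
    then have "y \<in> JJ j k m" using k'(2) unfolding JJ_def by simp
    then show False using assms(2) unfolding SS_def by blast
  qed
qed

lemma I1_sub: "dyadic_interval (j + 1) (2 * k) \<subseteq> dyadic_interval j k"
  using di_nest1[of _ "j+1" "2*k"] by auto

lemma I2_sub: "dyadic_interval (j + 1) (2 * k + 1) \<subseteq> dyadic_interval j k"
  using di_nest1[of _ "j+1" "2*k+1"] by auto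

lemma I12_disj: "x \<in> dyadic_interval (j + 1) (2 * k) \<Longrightarrow> x \<notin> dyadic_interval (j + 1) (2 * k + 1)"
  using di_uniq[of x "j+1" "2*k" "2*k+1"] by auto

lemma pj1: "(2::real) powr real_of_int (j + 1) = 2 * 2 powr real_of_int j"
  by (simp add: powr_add)

lemma I_split:
  assumes "x \<in> dyadic_interval j k"
  shows "x \<in> dyadic_interval (j + 1) (2 * k) \<or> x \<in> dyadic_interval (j + 1) (2 * k + 1)"
  using assms unfolding di_mem pj1 by auto

lemma haar_I1:
  assumes "x \<in> dyadic_interval (j + 1) (2 * k)" shows "haar j k x = 2 powr (real_of_int j / 2)"
  using assms unfolding di_mem pj1 haar_def haar_mother_def by (auto simp: indicator_def)

lemma haar_I2:
  assumes "x \<in> dyadic_interval (j + 1) (2 * k + 1)" shows "haar j k x = - (2 powr (real_of_int j / 2))"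
  using assms unfolding di_mem pj1 haar_def haar_mother_def by (auto simp: indicator_def)

lemma haar_out:
  assumes "x \<notin> dyadic_interval j k" shows "haar j k x = 0"
  using assms unfolding di_mem haar_def haar_mother_def by (auto simp: indicator_def)

lemma haar_sq:
  assumes "x \<in> dyadic_interval j k" shows "(haar j k x)\<^sup>2 = (2 powr (real_of_int j / 2))\<^sup>2"
  using I_split[OF assms] haar_I1 haar_I2 by auto


lemma dl_pos: "0 < dyadic_len j"
  unfolding dyadic_len_def by simp

lemma dl_shift: "dyadic_len (j - int n) = 2 ^ n * dyadic_len j"
proof -
  have "- real_of_int (j - int n) = real n + - real_of_int j" by simp
  then have "dyadic_len (j - int n) = 2 powr real n * 2 powr (- real_of_int j)"
    unfolding dyadic_len_def by (simp only: powr_add)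
  then show ?thesis unfolding dyadic_len_def by (simp add: powr_realpow)
qed

lemma dl_succ: "dyadic_len (j + 1) = dyadic_len j / 2"
proof -
  have "- real_of_int (j + 1) = - real_of_int j + - 1" by simp
  then have "dyadic_len (j + 1) = 2 powr (- real_of_int j) * 2 powr (- 1)"
    unfolding dyadic_len_def by (simp only: powr_add)
  moreover have "(2::real) powr (- 1) = 1 / 2" by (rule powr_neg_one) simp
  ultimately show ?thesis unfolding dyadic_len_def by simp
qed

lemma a_sq: "(2 powr (real_of_int j / 2))\<^sup>2 * dyadic_len j = 1"
proof -
  have "(2 powr (real_of_int j / 2))\<^sup>2 * dyadic_len j
      = 2 powr (real_of_int j / 2 + real_of_int j / 2 + - real_of_int j)"
    unfolding dyadic_len_def power2_eq_square by (simp only: powr_add)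
  also have "real_of_int j / 2 + real_of_int j / 2 + - real_of_int j = 0" by simp
  finally show ?thesis by simp
qed

lemma pow_geo:
  assumes "0 < L" shows "((2::real) ^ n * L) powr t = (2 powr t) ^ n * L powr t"
proof -
  have e1: "(2::real) ^ n = 2 powr real n" by (rule powr_realpow[symmetric]) simp
  have "((2::real) ^ n * L) powr t = (2 powr real n) powr t * L powr t"
    unfolding e1 using assms by (simp add: powr_mult)
  also have "(2 powr real n) powr t = 2 powr (real n * t)" by (rule powr_powr)
  also have "\<dots> = (2 powr t) ^ n" by (rule powr_power[symmetric]) simp
  finally show ?thesis .
qed

lemma JJ_measure: "emeasure lborel (JJ j k m) = ennreal (dyadic_len (j - int m))"
  unfolding JJ_def by (rule di_measure)

lemma SS_measure: "emeasure lborel (SS j k m) = ennreal (dyadic_len j * 2 ^ m)"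
proof -
  have "emeasure lborel (SS j k m) = emeasure lborel (JJ j k (Suc m)) - emeasure lborel (JJ j k m)"
    unfolding SS_def
    by (rule emeasure_Diff, simp add: JJ_measure, rule JJ_sets, rule JJ_sets, rule JJ_mono, simp)
  also have "\<dots> = ennreal (dyadic_len (j - int (Suc m)) - dyadic_len (j - int m))"
    unfolding JJ_measure by (rule ennreal_minus) (simp add: dl_pos less_imp_le)
  also have "dyadic_len (j - int (Suc m)) - dyadic_len (j - int m) = dyadic_len j * 2 ^ m"
    unfolding dl_shift by simp
  finally show ?thesis .
qed

lemma enn_mul3: "0 \<le> x \<Longrightarrow> 0 \<le> y \<Longrightarrow> 0 \<le> z \<Longrightarrow>
  ennreal (x * (y * z)) = ennreal x * (ennreal y * ennreal z)"
  by (simp only: ennreal_mult mult_nonneg_nonneg)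

lemma enn_sum2: "0 \<le> u \<Longrightarrow> 0 \<le> v \<Longrightarrow> ennreal u + ennreal v = ennreal (u + v)"
  by (rule ennreal_plus[symmetric])

theorem lemma2p4:
  fixes s :: real and j :: int and k :: nat
  assumes "0 < s" and "s < 1/2"
  shows "energy s (haar j k) = ennreal (gamma2 s * dyadic_len j powr (- 2 * s))"
proof -
  define a where "a = (2::real) powr (real_of_int j / 2)"
  define L where "L = dyadic_len j"
  define I where "I = dyadic_interval j k"
  define I1 where "I1 = dyadic_interval (j + 1) (2 * k)"
  define I2 where "I2 = dyadic_interval (j + 1) (2 * k + 1)"
  define D where "D = (\<lambda>m::nat. dyadic_len (j - int (Suc m)))"
  define c0 where "c0 = (2 * a)\<^sup>2 / (L powr (2 * s) * L)"
  define c where "c = (\<lambda>m. a\<^sup>2 / (D m powr (2 * s) * D m))"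
  define A where "A = (\<lambda>p. ennreal c0 * indicator (I1 \<times> I2) p + ennreal c0 * indicator (I2 \<times> I1) p)"
  define B where "B = (\<lambda>m p. ennreal (c m) * indicator (I \<times> SS j k m) p + ennreal (c m) * indicator (SS j k m \<times> I) p)"
  define E where "E = (\<lambda>p. ennreal (indicator ({0<..} \<times> {0<..}) p *
       ((haar j k (fst p) - haar j k (snd p))\<^sup>2 /
        (dyadic_dist (fst p) (snd p) powr (2 * s) * dyadic_dist (fst p) (snd p)))))"
  have Lpos: "0 < L" unfolding L_def by (rule dl_pos)
  have Dpos: "0 < D m" for m unfolding D_def by (rule dl_pos)
  have c0pos: "0 \<le> c0" unfolding c0_def using Lpos by simp
  have cpos: "0 \<le> c m" for m unfolding c_def using Dpos[of m] by simp
  have hI: "0 < z" if "z \<in> I" for z using di_pos that unfolding I_def by blast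
  have h1: "z \<in> I" if "z \<in> I1" for z using I1_sub that unfolding I_def I1_def by blast
  have h2: "z \<in> I" if "z \<in> I2" for z using I2_sub that unfolding I_def I2_def by blast
  have h12: "z \<notin> I2" if "z \<in> I1" for z using I12_disj that unfolding I1_def I2_def by blast
  have hS: "z \<notin> I" if "z \<in> SS j k m" for z m using SS_I that unfolding I_def by blast
  have hSp: "0 < z" if "z \<in> SS j k m" for z m using SS_pos that by blast
  have hsplit: "z \<in> I1 \<or> z \<in> I2" if "z \<in> I" for z
    using I_split that unfolding I_def I1_def I2_def by blast
  have hv1: "haar j k z = a" if "z \<in> I1" for z using haar_I1 that unfolding a_def I1_def by blast
  have hv2: "haar j k z = - a" if "z \<in> I2" for z using haar_I2 that unfolding a_def I2_def by blast
  have hv0: "haar j k z = 0" if "z \<notin> I" for z using haar_out that unfolding I_def by blast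
  have hsq: "(haar j k z)\<^sup>2 = a\<^sup>2" if "z \<in> I" for z using haar_sq that unfolding a_def I_def by blast
  have single: "(\<Sum>m. B m (x, y)) = ennreal (c m0)"
    if "\<And>m. B m (x, y) = (if m = m0 then ennreal (c m0) else 0)" for x y m0
  proof -
    have "(\<lambda>m. if m = m0 then ennreal (c m0) else 0) sums ennreal (c m0)"
      using sums_single[of m0 "\<lambda>_. ennreal (c m0)"] by simp
    then show ?thesis using that by (simp add: sums_iff)
  qed
    have dL: "dyadic_dist x y = L" if "x \<in> I1" "y \<in> I2" for x y
    proof -
      have "dyadic_dist x y = dyadic_len j"
      proof (rule dist_eq)
        show "x \<in> dyadic_interval j k" "y \<in> dyadic_interval j k" using h1 h2 that unfolding I_def by auto
        show "\<not> (\<exists>k'. x \<in> dyadic_interval (j + 1) k' \<and> y \<in> dyadic_interval (j + 1) k')"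
        proof
          assume "\<exists>k'. x \<in> dyadic_interval (j + 1) k' \<and> y \<in> dyadic_interval (j + 1) k'"
          then obtain k' where k': "x \<in> dyadic_interval (j + 1) k'" "y \<in> dyadic_interval (j + 1) k'" by blast
          have "k' = 2 * k" using di_uniq[OF k'(1)] that(1) unfolding I1_def by blast
          moreover have "k' = 2 * k + 1" using di_uniq[OF k'(2)] that(2) unfolding I2_def by blast
          ultimately show False by simp
        qed
      qed
      then show ?thesis unfolding L_def .
    qed
  have E_eq: "E (x, y) = ennreal (((haar j k x - haar j k y))\<^sup>2 /
        (dyadic_dist x y powr (2 * s) * dyadic_dist x y))" if "0 < x" "0 < y" for x y
    using that unfolding E_def by (simp add: indicator_simps)
  have E_0: "E (x, y) = 0" if "\<not> (0 < x \<and> 0 < y)" for x y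
  proof -
    have "(x, y) \<notin> {0<..} \<times> {0<..}" using that by auto
    then show ?thesis unfolding E_def by (simp add: indicator_simps)
  qed
  have pw_out: "E (x, y) = A (x, y) + (\<Sum>m. B m (x, y))" if "\<not> (0 < x \<and> 0 < y)" for x y
  proof -
    have "(x, y) \<notin> I1 \<times> I2" "(x, y) \<notin> I2 \<times> I1"
      using that hI[of x] hI[of y] h1[of x] h2[of y] h1[of y] h2[of x] by auto
    then have "A (x, y) = 0" unfolding A_def by (simp add: indicator_simps)
    moreover have "B m (x, y) = 0" for m
    proof -
      have "(x, y) \<notin> I \<times> SS j k m" "(x, y) \<notin> SS j k m \<times> I"
        using that hI[of x] hI[of y] hSp[of x m] hSp[of y m] by auto
      then show ?thesis unfolding B_def by (simp add: indicator_simps)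
    qed
    ultimately show ?thesis using E_0[OF that] by simp
  qed
  have pw_OO: "E (x, y) = A (x, y) + (\<Sum>m. B m (x, y))" if "0 < x" "0 < y" "x \<notin> I" "y \<notin> I" for x y
  proof -
    have "(x, y) \<notin> I1 \<times> I2" "(x, y) \<notin> I2 \<times> I1"
      using that h1[of x] h2[of x] by auto
    then have "A (x, y) = 0" unfolding A_def by (simp add: indicator_simps)
    moreover have "B m (x, y) = 0" for m
    proof -
      have "(x, y) \<notin> I \<times> SS j k m" "(x, y) \<notin> SS j k m \<times> I" using that by auto
      then show ?thesis unfolding B_def by (simp add: indicator_simps)
    qed
    moreover have "E (x, y) = 0" using E_eq[OF that(1,2)] hv0[OF that(3)] hv0[OF that(4)] by simp
    ultimately show ?thesis by simp
  qed
  have pw_II: "E (x, y) = A (x, y) + (\<Sum>m. B m (x, y))" if "x \<in> I" "y \<in> I" for x y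
  proof -
    note hyp = that
    have B0: "B m (x, y) = 0" for m
    proof -
      have "(x, y) \<notin> I \<times> SS j k m" "(x, y) \<notin> SS j k m \<times> I" using hyp hS[of y m] hS[of x m] by auto
      then show ?thesis unfolding B_def by (simp add: indicator_simps)
    qed
    have Ee: "E (x, y) = ennreal (((haar j k x - haar j k y))\<^sup>2 /
        (dyadic_dist x y powr (2 * s) * dyadic_dist x y))" using E_eq hI hyp by blast
    have xy12: "x \<in> I1 \<or> x \<in> I2" "y \<in> I1 \<or> y \<in> I2" using hsplit hyp by blast+
    consider "x \<in> I1" "y \<in> I1" | "x \<in> I1" "y \<in> I2" | "x \<in> I2" "y \<in> I1" | "x \<in> I2" "y \<in> I2"
      using xy12 by blast
    then show ?thesis
    proof cases
      case 1
      then have "(x, y) \<notin> I1 \<times> I2" "(x, y) \<notin> I2 \<times> I1" using h12[of x] h12[of y] by auto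
      then have "A (x, y) = 0" unfolding A_def by (simp add: indicator_simps)
      moreover have "E (x, y) = 0" unfolding Ee using hv1[OF 1(1)] hv1[OF 1(2)] by simp
      ultimately show ?thesis using B0 by simp
    next
      case 2
      then have "(x, y) \<in> I1 \<times> I2" "(x, y) \<notin> I2 \<times> I1" using h12[of x] by auto
      then have "A (x, y) = ennreal c0" unfolding A_def by (simp add: indicator_simps)
      moreover have "(a - - a)\<^sup>2 = (2 * a)\<^sup>2" by (simp add: power2_eq_square algebra_simps)
      moreover have "E (x, y) = ennreal ((a - - a)\<^sup>2 / (L powr (2 * s) * L))"
        unfolding Ee hv1[OF 2(1)] hv2[OF 2(2)] dL[OF 2] ..
      ultimately show ?thesis using B0 unfolding c0_def by simp
    next
      case 3
      then have "(x, y) \<notin> I1 \<times> I2" "(x, y) \<in> I2 \<times> I1" using h12[of y] by auto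
      then have "A (x, y) = ennreal c0" unfolding A_def by (simp add: indicator_simps)
      moreover have "(- a - a)\<^sup>2 = (2 * a)\<^sup>2" by (simp add: power2_eq_square algebra_simps)
      moreover have "dyadic_dist x y = L" using dL[of y x] 3 dist_sym[of x y] by simp
      moreover have "E (x, y) = ennreal ((- a - a)\<^sup>2 / (dyadic_dist x y powr (2 * s) * dyadic_dist x y))"
        unfolding Ee hv1[OF 3(2)] hv2[OF 3(1)] ..
      ultimately show ?thesis using B0 unfolding c0_def by simp
    next
      case 4
      then have "(x, y) \<notin> I1 \<times> I2" "(x, y) \<notin> I2 \<times> I1" using h12[of x] h12[of y] by auto
      then have "A (x, y) = 0" unfolding A_def by (simp add: indicator_simps)
      moreover have "E (x, y) = 0" unfolding Ee using hv2[OF 4(1)] hv2[OF 4(2)] by simp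
      ultimately show ?thesis using B0 by simp
    qed
  qed
  have pw_IO: "E (x, y) = A (x, y) + (\<Sum>m. B m (x, y))" if "x \<in> I" "0 < y" "y \<notin> I" for x y
  proof -
    note hyp = that
    obtain m0 where m0: "y \<in> SS j k m0" using SS_ex[of y j k] hyp unfolding I_def by blast
    have "(x, y) \<notin> I1 \<times> I2" "(x, y) \<notin> I2 \<times> I1" using hyp h1[of y] h2[of y] by auto
    then have "A (x, y) = 0" unfolding A_def by (simp add: indicator_simps)
    moreover have "B m (x, y) = (if m = m0 then ennreal (c m0) else 0)" for m
    proof (cases "m = m0")
      case True
      then have "(x, y) \<in> I \<times> SS j k m" "(x, y) \<notin> SS j k m \<times> I" using hyp m0 by auto
      then show ?thesis unfolding B_def using True by (simp add: indicator_simps)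
    next
      case False
      then have "y \<notin> SS j k m" using SS_disj[of y j k m0 m] m0 by auto
      then have "(x, y) \<notin> I \<times> SS j k m" "(x, y) \<notin> SS j k m \<times> I" using hyp by auto
      then show ?thesis unfolding B_def using False by (simp add: indicator_simps)
    qed
    moreover have "E (x, y) = ennreal (c m0)"
    proof -
      have "dyadic_dist x y = D m0" unfolding D_def using SS_dist[of x j k y m0] hyp m0 unfolding I_def by blast
      moreover have "(haar j k x - haar j k y)\<^sup>2 = a\<^sup>2" using hv0[OF hyp(3)] hsq[OF hyp(1)] by simp
      ultimately show ?thesis using E_eq[OF hI[OF hyp(1)] hyp(2)] unfolding c_def by simp
    qed
    ultimately show ?thesis using single[of x y m0] by simp
  qed
  have pw_OI: "E (x, y) = A (x, y) + (\<Sum>m. B m (x, y))" if "y \<in> I" "0 < x" "x \<notin> I" for x y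
  proof -
    note hyp = that
    obtain m0 where m0: "x \<in> SS j k m0" using SS_ex[of x j k] hyp unfolding I_def by blast
    have "(x, y) \<notin> I1 \<times> I2" "(x, y) \<notin> I2 \<times> I1" using hyp h1[of x] h2[of x] by auto
    then have "A (x, y) = 0" unfolding A_def by (simp add: indicator_simps)
    moreover have "B m (x, y) = (if m = m0 then ennreal (c m0) else 0)" for m
    proof (cases "m = m0")
      case True
      then have "(x, y) \<notin> I \<times> SS j k m" "(x, y) \<in> SS j k m \<times> I" using hyp m0 by auto
      then show ?thesis unfolding B_def using True by (simp add: indicator_simps)
    next
      case False
      then have "x \<notin> SS j k m" using SS_disj[of x j k m0 m] m0 by auto
      then have "(x, y) \<notin> I \<times> SS j k m" "(x, y) \<notin> SS j k m \<times> I" using hyp by auto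
      then show ?thesis unfolding B_def using False by (simp add: indicator_simps)
    qed
    moreover have "E (x, y) = ennreal (c m0)"
    proof -
      have "dyadic_dist y x = D m0" unfolding D_def using SS_dist[of y j k x m0] hyp m0 unfolding I_def by blast
      then have "dyadic_dist x y = D m0" using dist_sym[of x y] by simp
      moreover have "(haar j k x - haar j k y)\<^sup>2 = a\<^sup>2" using hv0[OF hyp(3)] hsq[OF hyp(1)] by simp
      ultimately show ?thesis using E_eq[OF hyp(2) hI[OF hyp(1)]] unfolding c_def by simp
    qed
    ultimately show ?thesis using single[of x y m0] by simp
  qed
  have pw: "E (x, y) = A (x, y) + (\<Sum>m. B m (x, y))" for x y
  proof -
    consider (out) "\<not> (0 < x \<and> 0 < y)" | (II) "x \<in> I" "y \<in> I"
      | (IO) "x \<in> I" "0 < y" "y \<notin> I" | (OI) "y \<in> I" "0 < x" "x \<notin> I"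
      | (OO) "0 < x" "0 < y" "x \<notin> I" "y \<notin> I"
      by blast
    then show ?thesis
      by cases (fact pw_out pw_II pw_IO pw_OI pw_OO)+
  qed
  have en: "energy s (haar j k) = integral\<^sup>N (lborel \<Otimes>\<^sub>M lborel) E"
    unfolding energy_def E_def by simp
  have sR: "X \<times> Y \<in> sets (lborel \<Otimes>\<^sub>M lborel)" if "X \<in> sets lborel" "Y \<in> sets lborel" for X Y
    using that by (rule pair_measureI)
  have sI: "I \<in> sets lborel" "I1 \<in> sets lborel" "I2 \<in> sets lborel"
    unfolding I_def I1_def I2_def by (rule di_sets)+
  have mind: "(\<lambda>p. ennreal c' * indicator X p) \<in> borel_measurable (lborel \<Otimes>\<^sub>M lborel)"
    if "X \<in> sets (lborel \<Otimes>\<^sub>M lborel)" for c' X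
    by (intro borel_measurable_times_ennreal borel_measurable_const borel_measurable_indicator that)
  have iind: "(\<integral>\<^sup>+p. ennreal c' * indicator (X \<times> Y) p \<partial>(lborel \<Otimes>\<^sub>M lborel))
      = ennreal c' * (emeasure lborel X * emeasure lborel Y)"
    if "X \<in> sets lborel" "Y \<in> sets lborel" for c' X Y
    using nn_integral_cmult_indicator[OF sR[OF that], of c'] lborel.emeasure_pair_measure_Times[OF that]
    by simp
  have measA: "A \<in> borel_measurable (lborel \<Otimes>\<^sub>M lborel)"
    unfolding A_def by (intro borel_measurable_add mind sR sI)
  have measB: "B m \<in> borel_measurable (lborel \<Otimes>\<^sub>M lborel)" for m
    unfolding B_def by (intro borel_measurable_add mind sR sI SS_sets)
  have mI1: "emeasure lborel I1 = ennreal (L / 2)" and mI2: "emeasure lborel I2 = ennreal (L / 2)"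
    and mI: "emeasure lborel I = ennreal L"
    unfolding I1_def I2_def I_def L_def di_measure dl_succ by simp_all
  have mS: "emeasure lborel (SS j k m) = ennreal (L * 2 ^ m)" for m
    unfolding L_def by (rule SS_measure)
  define r where "r = (2::real) powr (- 2 * s)"
  define L' where "L' = L powr (- 2 * s)"
  have rpos: "0 < r" unfolding r_def by simp
  have "(2::real) powr (- 2 * s) < 2 powr 0" by (rule powr_less_mono) (use assms in simp_all)
  then have rlt: "r < 1" unfolding r_def by simp
  have L'pos: "0 < L'" unfolding L'_def using Lpos by simp
  have asq: "a\<^sup>2 = 1 / L" using a_sq[of j] Lpos unfolding a_def L_def by (simp add: field_simps)
  have asq2: "L * (a * a) = 1" using asq Lpos by (simp add: power2_eq_square field_simps)
  have eL: "L' = 1 / L powr (2 * s)" unfolding L'_def using powr_minus_divide[of L "2 * s"] by simp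
  have rA: "c0 * (L / 2 * (L / 2)) + c0 * (L / 2 * (L / 2)) = 2 * L'"
    using Lpos unfolding c0_def eL by (simp add: power_mult_distrib asq asq2 field_simps power2_eq_square)
  have rB: "c m * (L * (L * 2 ^ m)) + c m * (L * 2 ^ m * L) = L' * r ^ Suc m" for m
  proof -
    define q where "q = (2::real) powr (2 * s)"
    have qpos: "0 < q" unfolding q_def by simp
    have rq: "r = 1 / q" unfolding r_def q_def using powr_minus_divide[of 2 "2 * s"] by simp
    have Dm: "D m = 2 ^ Suc m * L" unfolding D_def L_def by (rule dl_shift)
    have Dp: "D m powr (2 * s) = q ^ Suc m * L powr (2 * s)" unfolding Dm q_def using Lpos by (rule pow_geo)
    show ?thesis using Lpos qpos unfolding c_def Dp eL rq unfolding Dm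
      by (simp add: asq field_simps power_one_over)
  qed
  have iA: "integral\<^sup>N (lborel \<Otimes>\<^sub>M lborel) A = ennreal (2 * L')"
  proof -
    have "integral\<^sup>N (lborel \<Otimes>\<^sub>M lborel) A
        = ennreal c0 * (ennreal (L / 2) * ennreal (L / 2)) + ennreal c0 * (ennreal (L / 2) * ennreal (L / 2))"
      unfolding A_def
      by (subst nn_integral_add[OF mind[OF sR[OF sI(2) sI(3)]] mind[OF sR[OF sI(3) sI(2)]]])
        (unfold iind[OF sI(2) sI(3)] iind[OF sI(3) sI(2)] mI1 mI2, rule refl)
    also have "\<dots> = ennreal (c0 * (L / 2 * (L / 2))) + ennreal (c0 * (L / 2 * (L / 2)))"
      using c0pos Lpos by (simp only: enn_mul3 less_imp_le half_gt_zero)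
    also have "\<dots> = ennreal (c0 * (L / 2 * (L / 2)) + c0 * (L / 2 * (L / 2)))"
      using c0pos Lpos by (intro enn_sum2) simp_all
    finally show ?thesis unfolding rA .
  qed
  have iB: "integral\<^sup>N (lborel \<Otimes>\<^sub>M lborel) (B m) = ennreal (L' * r ^ Suc m)" for m
  proof -
    have "integral\<^sup>N (lborel \<Otimes>\<^sub>M lborel) (B m)
        = ennreal (c m) * (ennreal L * ennreal (L * 2 ^ m)) + ennreal (c m) * (ennreal (L * 2 ^ m) * ennreal L)"
      unfolding B_def
      by (subst nn_integral_add[OF mind[OF sR[OF sI(1) SS_sets]] mind[OF sR[OF SS_sets sI(1)]]])
        (unfold iind[OF sI(1) SS_sets] iind[OF SS_sets sI(1)] mI mS, rule refl)
    also have "\<dots> = ennreal (c m * (L * (L * 2 ^ m))) + ennreal (c m * (L * 2 ^ m * L))"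
    proof -
      have "0 \<le> L" "0 \<le> L * 2 ^ m" "0 \<le> c m" using Lpos cpos[of m] by simp_all
      then show ?thesis by (simp only: enn_mul3)
    qed
    also have "\<dots> = ennreal (c m * (L * (L * 2 ^ m)) + c m * (L * 2 ^ m * L))"
      using cpos[of m] Lpos by (intro enn_sum2) simp_all
    finally show ?thesis unfolding rB .
  qed
  have geo: "(\<Sum>m. ennreal (L' * r ^ Suc m)) = ennreal (L' * r / (1 - r))"
  proof -
    have eq: "(\<lambda>m. L' * r ^ Suc m) = (\<lambda>m. (L' * r) * r ^ m)" by (simp add: mult.assoc)
    have nr: "norm r < 1" using rpos rlt by simp
    have sg: "summable (\<lambda>m::nat. r ^ m)" using nr by (rule summable_geometric)
    have sm: "summable (\<lambda>m. L' * r ^ Suc m)" unfolding eq using sg by (rule summable_mult)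
    have "(\<Sum>m. L' * r ^ Suc m) = L' * r * (\<Sum>m. r ^ m)" unfolding eq using sg by (rule suminf_mult)
    also have "(\<Sum>m. r ^ m) = 1 / (1 - r)" using nr by (rule suminf_geometric)
    finally have val: "(\<Sum>m. L' * r ^ Suc m) = L' * r / (1 - r)" by simp
    have nn: "0 \<le> L' * r ^ Suc m" for m using L'pos rpos by simp
    have "(\<Sum>m. ennreal (L' * r ^ Suc m)) = ennreal (\<Sum>m. L' * r ^ Suc m)"
      using nn sm by (rule suminf_ennreal2)
    then show ?thesis unfolding val .
  qed

  have "energy s (haar j k) = integral\<^sup>N (lborel \<Otimes>\<^sub>M lborel) (\<lambda>p. A p + (\<Sum>m. B m p))"
    unfolding en
  proof (rule nn_integral_cong)
    fix p show "E p = A p + (\<Sum>m. B m p)" using pw[of "fst p" "snd p"] by simp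
  qed
  also have "\<dots> = integral\<^sup>N (lborel \<Otimes>\<^sub>M lborel) A + integral\<^sup>N (lborel \<Otimes>\<^sub>M lborel) (\<lambda>p. \<Sum>m. B m p)"
    by (rule nn_integral_add[OF measA borel_measurable_suminf_order[OF measB]])
  also have "integral\<^sup>N (lborel \<Otimes>\<^sub>M lborel) (\<lambda>p. \<Sum>m. B m p) = (\<Sum>m. integral\<^sup>N (lborel \<Otimes>\<^sub>M lborel) (B m))"
    by (rule nn_integral_suminf[OF measB])
  also have "\<dots> = ennreal (L' * r / (1 - r))" unfolding iB geo ..
  also have "integral\<^sup>N (lborel \<Otimes>\<^sub>M lborel) A + ennreal (L' * r / (1 - r)) = ennreal (2 * L' + L' * r / (1 - r))"
    using L'pos rpos rlt unfolding iA by (intro enn_sum2) simp_all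
  also have "2 * L' + L' * r / (1 - r) = gamma2 s * dyadic_len j powr (- 2 * s)"
    using rlt unfolding gamma2_def L'_def L_def[symmetric] r_def[symmetric] by (simp add: field_simps)
  finally show ?thesis .
qed

end
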